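(* Let $\Lambda:\mathbb{R}\to[0,1]$ be a right-continuous decreasing function, $n\in\mathbb N$, $\Theta$ a convex set, $f:\Theta\times\mathbb{R}^n\to\mathbb{R}$, $\mathbf L\in(L^\infty)^n$ such that $f(\boldsymbol\theta,\mathbf L)\in L^\infty$ for all $\boldsymbol\theta\in\Theta$, and $\ell\in\mathbb{R}$. Then for every $\boldsymbol\theta\in\Theta$, $\mathrm{ES}_\Lambda(f(\boldsymbol\theta,\mathbf L))\le\ell$ if and only if $\mathrm{ES}_{\Lambda(\ell)}(f(\boldsymbol\theta,\mathbf L))\le\ell$.
   Context: $(\Omega,\mathcal F,\mathbb P)$ is an atomless probability space, $L^\infty$ the essentially bounded random variables; "decreasing" is weak; $\wedge=\min$. For $\alpha\in[0,1]$: $\mathrm{VaR}_\alpha(X)=\inf\{x\in\mathbb{R}:\mathbb P(X\le x)\ge\alpha\}$; $\mathrm{ES}_\alpha(X)=\frac{1}{1-\alpha}\int_\alpha^1\mathrm{VaR}_\beta(X)\,\mathrm d\beta$ for $\alpha<1$, $\mathrm{ES}_1(X)=\mathrm{VaR}_1(X)$; for decreasing $\Lambda:\mathbb{R}\to[0,1]$, $\mathrm{ES}_\Lambda(X)=\sup_{x\in\mathbb{R}}\left(\mathrm{ES}_{\Lambda(x)}(X)\wedge x\right)$, $X\in L^\infty$. *)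

theory Defs
  imports "HOL-Probability.Probability"
begin

definition atomless :: "'a measure \<Rightarrow> bool" where
  "atomless M \<longleftrightarrow> (\<forall>A\<in>sets M. measure M A > 0 \<longrightarrow>
      (\<exists>B\<in>sets M. B \<subseteq> A \<and> 0 < measure M B \<and> measure M B < measure M A))"

definition Linf :: "'a measure \<Rightarrow> ('a \<Rightarrow> real) set" where
  "Linf M = {X. X \<in> borel_measurable M \<and> (\<exists>C. AE \<omega> in M. \<bar>X \<omega>\<bar> \<le> C)}"

text \<open>For \<alpha> = 0 the mathematical value is -\<infinity>;
  here Inf of an unbounded set is an unspecified real, which is irrelevant
  since VaR at a single level does not affect the ES integrals below.\<close>
definition VaR :: "'a measure \<Rightarrow> real \<Rightarrow> ('a \<Rightarrow> real) \<Rightarrow> real" where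
  "VaR M \<alpha> X = Inf {x. measure M {\<omega> \<in> space M. X \<omega> \<le> x} \<ge> \<alpha>}"

definition ES :: "'a measure \<Rightarrow> real \<Rightarrow> ('a \<Rightarrow> real) \<Rightarrow> real" where
  "ES M \<alpha> X = (if \<alpha> < 1 then (1 / (1 - \<alpha>)) * integral {\<alpha>..1} (\<lambda>\<beta>. VaR M \<beta> X)
                else VaR M 1 X)"

definition ES_Lambda :: "'a measure \<Rightarrow> (real \<Rightarrow> real) \<Rightarrow> ('a \<Rightarrow> real) \<Rightarrow> real" where
  "ES_Lambda M \<Lambda> X = (SUP x\<in>(UNIV::real set). min (ES M (\<Lambda> x) X) x)"

end

theory Submission imports Defs begin

context
  fixes M :: "'a measure" and X :: "'a \<Rightarrow> real" and C :: real
  assumes P: "prob_space M" and Xm: "X \<in> borel_measurable M"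
    and XC: "AE \<omega> in M. \<bar>X \<omega>\<bar> \<le> C"
begin

definition "FF x = measure M {\<omega> \<in> space M. X \<omega> \<le> x}"

lemma FF_meas: "{\<omega> \<in> space M. X \<omega> \<le> x} \<in> sets M"
  using Xm by measurable

lemma FF_C: "FF C = 1"
proof -
  have "AE \<omega> in M. \<omega> \<in> {\<omega> \<in> space M. X \<omega> \<le> C}"
    using AE_space XC by eventually_elim auto
  then show ?thesis unfolding FF_def using prob_space.prob_eq_1[OF P FF_meas] by blast
qed

lemma FF_low: "x < -C \<Longrightarrow> FF x = 0"
proof -
  assume x: "x < -C"
  have "AE \<omega> in M. \<omega> \<notin> {\<omega> \<in> space M. X \<omega> \<le> x}"
    using AE_space XC by eventually_elim (use x in auto)
  then show ?thesis unfolding FF_def using prob_space.prob_eq_0[OF P FF_meas] by blast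
qed

lemma FF_mono: "x \<le> y \<Longrightarrow> FF x \<le> FF y"
  unfolding FF_def
  by (rule finite_measure.finite_measure_mono[OF prob_space.axioms(1)[OF P]])
     (use FF_meas in auto)

lemma VaR_eq: "VaR M \<beta> X = Inf {x. FF x \<ge> \<beta>}"
  unfolding VaR_def FF_def by simp

lemma S_ne: "\<beta> \<le> 1 \<Longrightarrow> C \<in> {x. FF x \<ge> \<beta>}"
  using FF_C by simp

lemma S_bdd: "0 < \<beta> \<Longrightarrow> bdd_below {x. FF x \<ge> \<beta>}"
proof -
  assume b: "0 < \<beta>"
  have "-C \<le> x" if "FF x \<ge> \<beta>" for x
  proof (rule ccontr)
    assume "\<not> - C \<le> x"
    then have "FF x = 0" using FF_low by simp
    then show False using that b by simp
  qed
  then show ?thesis unfolding bdd_below_def by blast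
qed

lemma VaR_bounds: "0 < \<beta> \<Longrightarrow> \<beta> \<le> 1 \<Longrightarrow> -C \<le> VaR M \<beta> X \<and> VaR M \<beta> X \<le> C"
proof
  assume b: "0 < \<beta>" "\<beta> \<le> 1"
  show "-C \<le> VaR M \<beta> X" unfolding VaR_eq
    apply (rule cInf_greatest)
    using S_ne[OF b(2)] apply blast
  proof (clarsimp)
    fix x assume "\<beta> \<le> FF x"
    then show "-C \<le> x" using b FF_low[of x] by (cases "x < -C") auto
  qed
  show "VaR M \<beta> X \<le> C" unfolding VaR_eq
    by (rule cInf_lower[OF S_ne[OF b(2)] S_bdd[OF b(1)]])
qed

lemma VaR_mono: "0 < \<beta> \<Longrightarrow> \<beta> \<le> \<beta>' \<Longrightarrow> \<beta>' \<le> 1 \<Longrightarrow> VaR M \<beta> X \<le> VaR M \<beta>' X"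
  unfolding VaR_eq
proof (rule cInf_superset_mono)
  assume b: "0 < \<beta>" "\<beta> \<le> \<beta>'" "\<beta>' \<le> 1"
  show "{x. \<beta>' \<le> FF x} \<noteq> {}" using S_ne[OF b(3)] by blast
  show "bdd_below {x. \<beta> \<le> FF x}" using S_bdd[OF b(1)] .
  show "{x. \<beta>' \<le> FF x} \<subseteq> {x. \<beta> \<le> FF x}" using b(2) by auto
qed

definition "V \<beta> = (if \<beta> \<le> 0 then -C else VaR M (min \<beta> 1) X)"

lemma V_ge: "-C \<le> V \<beta>"
  unfolding V_def using VaR_bounds[of "min \<beta> 1"] by auto

lemma V_mono: "mono V"
proof
  fix b b' :: real assume "b \<le> b'"
  then show "V b \<le> V b'"
  proof (cases "b \<le> 0")
    case True
    then show ?thesis using V_ge[of b'] by (simp add: V_def)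
  next
    case False
    then have "VaR M (min b 1) X \<le> VaR M (min b' 1) X"
      using \<open>b \<le> b'\<close> by (intro VaR_mono) auto
    then show ?thesis using False \<open>b \<le> b'\<close> by (simp add: V_def)
  qed
qed

lemma V_int: "V integrable_on {a..b}"
  by (rule integrable_on_mono_on) (use V_mono in \<open>auto simp: mono_on_def mono_def\<close>)

definition "I a = integral {a..1} V"

lemma ES_eq: "0 \<le> \<alpha> \<Longrightarrow> \<alpha> < 1 \<Longrightarrow> ES M \<alpha> X = I \<alpha> / (1 - \<alpha>)"
proof -
  assume a: "0 \<le> \<alpha>" "\<alpha> < 1"
  have "integral {\<alpha>..1} (\<lambda>\<beta>. VaR M \<beta> X) = integral {\<alpha>..1} V"
    by (rule integral_spike[of "{0}"]) (use a in \<open>auto simp: V_def\<close>)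
  then show ?thesis unfolding ES_def I_def using a by simp
qed

lemma ES_1: "ES M 1 X = V 1"
  unfolding ES_def V_def by simp

lemma I_lower: "\<alpha> \<le> 1 \<Longrightarrow> (1 - \<alpha>) * V \<alpha> \<le> I \<alpha>"
proof -
  assume a: "\<alpha> \<le> 1"
  have "integral {\<alpha>..1} (\<lambda>_. V \<alpha>) \<le> I \<alpha>" unfolding I_def
    by (rule integral_le) (use V_int V_mono in \<open>auto simp: mono_def\<close>)
  then show ?thesis using a by (simp add: content_real)
qed

lemma I_upper: "\<alpha> \<le> 1 \<Longrightarrow> I \<alpha> \<le> (1 - \<alpha>) * V 1"
proof -
  assume a: "\<alpha> \<le> 1"
  have "I \<alpha> \<le> integral {\<alpha>..1} (\<lambda>_. V 1)" unfolding I_def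
    by (rule integral_le) (use V_int V_mono in \<open>auto simp: mono_def\<close>)
  then show ?thesis using a by (simp add: content_real)
qed

lemma I_split: "a \<le> b \<Longrightarrow> b \<le> 1 \<Longrightarrow> I a = integral {a..b} V + I b"
  unfolding I_def using Henstock_Kurzweil_Integration.integral_combine[OF _ _ V_int, of a b 1] by simp

lemma J_upper: "a \<le> b \<Longrightarrow> integral {a..b} V \<le> (b - a) * V b"
proof -
  assume a: "a \<le> b"
  have "integral {a..b} V \<le> integral {a..b} (\<lambda>_. V b)"
    by (rule integral_le) (use V_int V_mono in \<open>auto simp: mono_def\<close>)
  then show ?thesis using a by (simp add: content_real)
qed

lemma J_lower: "a \<le> b \<Longrightarrow> (b - a) * (-C) \<le> integral {a..b} V"
proof -
  assume a: "a \<le> b"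
  have "integral {a..b} (\<lambda>_. -C) \<le> integral {a..b} V"
    by (rule integral_le) (use V_int V_ge in \<open>auto\<close>)
  then show ?thesis using a by (simp add: content_real)
qed

lemma ES_mono: "0 \<le> \<alpha> \<Longrightarrow> \<alpha> \<le> \<alpha>' \<Longrightarrow> \<alpha>' \<le> 1 \<Longrightarrow> ES M \<alpha> X \<le> ES M \<alpha>' X"
proof -
  assume a: "0 \<le> \<alpha>" "\<alpha> \<le> \<alpha>'" "\<alpha>' \<le> 1"
  show ?thesis
  proof (cases "\<alpha>' = 1")
    case True
    show ?thesis
    proof (cases "\<alpha> = 1")
      case False
      then have "\<alpha> < 1" using a by auto
      then have a2: "\<alpha> < 1" .
      have "I \<alpha> / (1 - \<alpha>) \<le> (1 - \<alpha>) * V 1 / (1 - \<alpha>)"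
        by (rule divide_right_mono) (use I_upper a2 in auto)
      then show ?thesis using ES_eq[OF a(1) a2] True ES_1 a2 by simp
    qed (use True in simp)
  next
    case False
    then have a1: "\<alpha>' < 1" "\<alpha> < 1" using a by auto
    have s: "I \<alpha> = integral {\<alpha>..\<alpha>'} V + I \<alpha>'" using I_split a by auto
    have j: "integral {\<alpha>..\<alpha>'} V \<le> (\<alpha>' - \<alpha>) * V \<alpha>'" using J_upper a by auto
    have l: "(1 - \<alpha>') * V \<alpha>' \<le> I \<alpha>'" using I_lower a by auto
    have "(\<alpha>' - \<alpha>) * ((1 - \<alpha>') * V \<alpha>') \<le> (\<alpha>' - \<alpha>) * I \<alpha>'"
      using l a by (intro mult_left_mono) auto
    then have "I \<alpha> * (1 - \<alpha>') \<le> I \<alpha>' * (1 - \<alpha>)"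
      using s j a1 mult_right_mono[OF j, of "1-\<alpha>'"]
      by (simp add: algebra_simps)
    moreover have "0 \<le> (1 - \<alpha>) * (1 - \<alpha>')" using a1 by (intro mult_nonneg_nonneg) auto
    ultimately have "I \<alpha> * (1 - \<alpha>') / ((1 - \<alpha>) * (1 - \<alpha>')) \<le> I \<alpha>' * (1 - \<alpha>) / ((1 - \<alpha>) * (1 - \<alpha>'))"
      by (rule divide_right_mono)
    moreover have "I \<alpha> * (1 - \<alpha>') / ((1 - \<alpha>) * (1 - \<alpha>')) = I \<alpha> / (1 - \<alpha>)"
      using a1 by (intro mult_divide_mult_cancel_right) auto
    moreover have "I \<alpha>' * (1 - \<alpha>) / ((1 - \<alpha>) * (1 - \<alpha>')) = I \<alpha>' / (1 - \<alpha>')"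
      using a1 mult_divide_mult_cancel_right[of "1 - \<alpha>" "I \<alpha>'" "1 - \<alpha>'"] by (simp only: mult.commute)
    ultimately have "I \<alpha> / (1 - \<alpha>) \<le> I \<alpha>' / (1 - \<alpha>')" by simp
    then show ?thesis using ES_eq[of \<alpha>] ES_eq[of \<alpha>'] a a1 by simp
  qed
qed

lemma ES_leftcont:
  assumes a0: "0 < a0" "a0 \<le> 1" and h: "\<And>\<alpha>. 0 < \<alpha> \<Longrightarrow> \<alpha> < a0 \<Longrightarrow> ES M \<alpha> X \<le> l"
  shows "ES M a0 X \<le> l"
proof (cases "a0 = 1")
  case False
  then have a1: "a0 < 1" using a0 by auto
  have ev: "eventually (\<lambda>\<alpha>. I a0 \<le> l * (1 - \<alpha>) + C * (a0 - \<alpha>)) (at_left a0)"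
    unfolding eventually_at_left_field
  proof (intro exI[of _ 0] conjI allI impI)
    fix \<alpha> :: real assume b: "0 < \<alpha>" "\<alpha> < a0"
    have e: "ES M \<alpha> X = I \<alpha> / (1 - \<alpha>)" using ES_eq[of \<alpha>] b a1 by simp
    have "I \<alpha> / (1 - \<alpha>) \<le> l" using h[OF b] by (simp only: e)
    then have "I \<alpha> \<le> l * (1 - \<alpha>)" using pos_divide_le_eq[of "1 - \<alpha>" "I \<alpha>" l] b a1 by simp
    moreover have "I \<alpha> = integral {\<alpha>..a0} V + I a0" using I_split b a1 by auto
    moreover have "(a0 - \<alpha>) * (-C) \<le> integral {\<alpha>..a0} V" using J_lower b by auto
    ultimately show "I a0 \<le> l * (1 - \<alpha>) + C * (a0 - \<alpha>)" by (simp add: algebra_simps)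
  qed (use a0 in auto)
  have lim: "((\<lambda>\<alpha>. l * (1 - \<alpha>) + C * (a0 - \<alpha>)) \<longlongrightarrow> l * (1 - a0) + C * (a0 - a0)) (at_left a0)"
    by (intro tendsto_intros)
  have "I a0 \<le> l * (1 - a0)"
    using tendsto_le[OF _ lim tendsto_const ev] by simp
  then have "I a0 / (1 - a0) \<le> l * (1 - a0) / (1 - a0)"
    by (rule divide_right_mono) (use a1 in auto)
  then show ?thesis using ES_eq[of a0] a0 a1 by simp
next
  case True
  have VaRl: "VaR M \<alpha> X \<le> l" if b: "0 < \<alpha>" "\<alpha> < 1" for \<alpha>
  proof -
    have "(1 - \<alpha>) * V \<alpha> \<le> I \<alpha>" using I_lower b by auto
    then have "V \<alpha> * (1 - \<alpha>) \<le> I \<alpha>" by (simp only: mult.commute)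
    then have "V \<alpha> \<le> I \<alpha> / (1 - \<alpha>)" using pos_le_divide_eq[of "1 - \<alpha>" "V \<alpha>" "I \<alpha>"] b by simp
    also have e: "\<dots> = ES M \<alpha> X" using ES_eq[of \<alpha>] b by simp
    also have "\<dots> \<le> l" using h[of \<alpha>] b True by simp
    finally show ?thesis using b by (simp add: V_def)
  qed
  have "VaR M 1 X \<le> l + e" if e: "0 < e" for e
  proof -
    have Fa: "\<alpha> \<le> FF (l + e)" if b: "0 < \<alpha>" "\<alpha> < 1" for \<alpha>
    proof -
      have "Inf {x. FF x \<ge> \<alpha>} < l + e" using VaRl[OF b] e VaR_eq by simp
      then obtain x where "FF x \<ge> \<alpha>" "x < l + e"
        using cInf_less_iff[of "{x. FF x \<ge> \<alpha>}"] S_bdd[OF b(1)] S_ne[of \<alpha>] b by auto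
      then show ?thesis using FF_mono[of x "l + e"] by auto
    qed
    have "1 \<le> FF (l + e)" by (rule dense_le_bounded[of 0]) (auto intro: Fa)
    then have "l + e \<in> {x. 1 \<le> FF x}" by simp
    from cInf_lower[OF this S_bdd[of 1]] show ?thesis unfolding VaR_eq by simp
  qed
  then have "VaR M 1 X \<le> l" by (rule field_le_epsilon)
  then show ?thesis using True by (simp add: ES_def)
qed

end

theorem proposition4:
  fixes M :: "'a measure"
    and \<Lambda> :: "real \<Rightarrow> real"
    and \<Theta> :: "'p::real_vector set"
    and f :: "'p \<Rightarrow> real ^ 'n \<Rightarrow> real"
    and L :: "'a \<Rightarrow> real ^ 'n"
    and l :: real
  assumes "prob_space M"
    and "atomless M"
    and "\<And>x. 0 \<le> \<Lambda> x \<and> \<Lambda> x \<le> 1"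
    and "\<And>x y. x \<le> y \<Longrightarrow> \<Lambda> y \<le> \<Lambda> x"
    and "\<And>x. continuous (at_right x) \<Lambda>"
    and "convex \<Theta>"
    and "\<And>i. (\<lambda>\<omega>. L \<omega> $ i) \<in> Linf M"
    and "\<And>\<theta>. \<theta> \<in> \<Theta> \<Longrightarrow> (\<lambda>\<omega>. f \<theta> (L \<omega>)) \<in> Linf M"
  shows "\<forall>\<theta>\<in>\<Theta>. (ES_Lambda M \<Lambda> (\<lambda>\<omega>. f \<theta> (L \<omega>)) \<le> l
            \<longleftrightarrow> ES M (\<Lambda> l) (\<lambda>\<omega>. f \<theta> (L \<omega>)) \<le> l)"
proof
  fix \<theta> assume th: "\<theta> \<in> \<Theta>"
  define X where "X = (\<lambda>\<omega>. f \<theta> (L \<omega>))"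
  have "X \<in> Linf M" using assms(8)[OF th] X_def by simp
  then obtain C where Xm: "X \<in> borel_measurable M" and XC: "AE \<omega> in M. \<bar>X \<omega>\<bar> \<le> C"
    unfolding Linf_def by auto
  note mono = ES_mono[OF assms(1) Xm XC]
  note lc = ES_leftcont[OF assms(1) Xm XC]
  have Lb: "0 \<le> \<Lambda> x" "\<Lambda> x \<le> 1" for x using assms(3) by auto
  have bnd: "ES M (\<Lambda> x) X \<le> ES M 1 X" for x using mono[OF Lb(1) Lb(2)] by simp
  have bdd: "bdd_above (range (\<lambda>x. min (ES M (\<Lambda> x) X) x))"
    unfolding bdd_above_def using bnd by (auto intro!: exI[of _ "ES M 1 X"] min.coboundedI1)
  show "ES_Lambda M \<Lambda> X \<le> l \<longleftrightarrow> ES M (\<Lambda> l) X \<le> l"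
  proof
    assume "ES_Lambda M \<Lambda> X \<le> l"
    then have g: "min (ES M (\<Lambda> x) X) x \<le> l" for x
      unfolding ES_Lambda_def using cSUP_upper[OF UNIV_I bdd, of x] by linarith
    have gx: "ES M (\<Lambda> x) X \<le> l" if "l < x" for x using g[of x] that by linarith
    show "ES M (\<Lambda> l) X \<le> l"
    proof (cases "\<Lambda> l = 0")
      case True
      then have "\<Lambda> (l + 1) = 0" using assms(4)[of l "l+1"] Lb[of "l+1"] by auto
      then show ?thesis using gx[of "l+1"] True by simp
    next
      case False
      then have p: "0 < \<Lambda> l" using Lb[of l] by auto
      show ?thesis
      proof (rule lc[OF p Lb(2)])
        fix \<alpha> assume a: "0 < \<alpha>" "\<alpha> < \<Lambda> l"
        have "(\<Lambda> \<longlongrightarrow> \<Lambda> l) (at_right l)"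
          using assms(5)[of l] by (simp add: continuous_within)
        then have "eventually (\<lambda>x. \<alpha> < \<Lambda> x) (at_right l)"
          using a(2) by (rule order_tendstoD)
        then obtain b where b: "b > l" "\<And>y. y > l \<Longrightarrow> y < b \<Longrightarrow> \<alpha> < \<Lambda> y"
          unfolding eventually_at_right_field by auto
        define y where "y = (l + b) / 2"
        have y: "l < y" "\<alpha> < \<Lambda> y" using b unfolding y_def by auto
        have "ES M \<alpha> X \<le> ES M (\<Lambda> y) X" using mono[of \<alpha> "\<Lambda> y"] a y Lb by auto
        also have "\<dots> \<le> l" using gx[OF y(1)] .
        finally show "ES M \<alpha> X \<le> l" .
      qed
    qed
  next
    assume h: "ES M (\<Lambda> l) X \<le> l"
    have "min (ES M (\<Lambda> x) X) x \<le> l" for x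
    proof (cases "x \<le> l")
      case False
      then have "ES M (\<Lambda> x) X \<le> ES M (\<Lambda> l) X"
        using mono[OF Lb(1) assms(4)[of l x] Lb(2)] by auto
      then show ?thesis using h by linarith
    qed auto
    then show "ES_Lambda M \<Lambda> X \<le> l" unfolding ES_Lambda_def by (intro cSUP_least) auto
  qed
qed

end
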